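(* In the setting below with $P=\mathfrak S$, the worst case setting and the absolute error criterion, assume $\lambda_1\le1$. Then $\{S_d\}$ is strongly polynomially tractable if and only if $\lambda\in\ell_\tau$ for some $\tau>0$ and either $\lambda_1<1$, or $1=\lambda_1>\lambda_2$ and $d-\#I_d\in O(1)$. Moreover, $\{S_d\}$ is polynomially tractable if and only if $\lambda\in\ell_\tau$ for some $\tau>0$ and either $\lambda_1<1$, or $\lambda_1=1$ and $d-\#I_d\in O(\ln d)$.
   Context: Setting: $S_1:H_1\to G_1$ is a compact linear operator between real Hilbert spaces ($H_1$ infinite-dimensional separable); $\lambda=(\lambda_m)_{m\in\mathbb N}$, $\lambda_1\ge\lambda_2\ge\dots\ge0$, are the eigenvalues of $S_1^\dagger S_1$. $S_d=S_1^{\otimes d}:H_1^{\otimes d}\to G_1^{\otimes d}$. For each $d$ fix $\emptyset\ne I_d=\{i_1<\dots<i_{a_d}\}\subset\{1,\dots,d\}$ ($I_1=\{1\}$), put $a_d=\#I_d$, $b_d=d-a_d$, and fix one type $P\in\{\mathfrak S,\mathfrak A\}$ for all $d$; the problem $\{S_d\}$ is the family of restrictions of $S_d$ to the $I_d$-symmetric subspace (if $P=\mathfrak S$) or $I_d$-antisymmetric subspace (if $P=\mathfrak A$) of $H_1^{\otimes d}$, i.e. the range of $\frac1{a_d!}\sum_{\pi}(\pm1)U_\pi$, the sum over permutations $\pi$ of $\{1,\dots,d\}$ fixing all points outside $I_d$, $U_\pi(f_1\otimes\cdots\otimes f_d)=f_{\pi(1)}\otimes\cdots\otimes f_{\pi(d)}$,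 sign $(-1)^{|\pi|}$ used for $\mathfrak A$. Let $\nabla_d=\{k\in\mathbb N^d:k_{i_1}\le\dots\le k_{i_{a_d}}\}$ for $P=\mathfrak S$ and with strict inequalities for $P=\mathfrak A$; $\lambda_{d,k}=\prod_{l=1}^d\lambda_{k_l}$; $\psi:\mathbb N\to\nabla_d$ a bijection with $\lambda_{d,\psi(1)}\ge\lambda_{d,\psi(2)}\ge\cdots$. These are exactly the eigenvalues of $S_d^\dagger S_d$ on the subspace, and the information complexity (absolute error) is $n(\epsilon,d)=\#\{k\in\nabla_d:\lambda_{d,k}>\epsilon^2\}$, the initial error $\epsilon^{\rm init}_d=\sqrt{\lambda_{d,\psi(1)}}$ (equal to $\lambda_1^{d/2}$ if $P=\mathfrak S$, and $\sqrt{\lambda_1^{b_d}\lambda_1\lambda_2\cdots\lambda_{a_d}}$ if $P=\mathfrak A$). Polynomially tractable: $\exists C,p>0,q\ge0$ with $n(\epsilon,d)\le C\epsilon^{-p}d^q$ for all $d\in\mathbb N,\epsilon\in(0,1]$; strongly polynomially tractable: this with $q=0$. Standing assumptions: $\lambda_2>0$ and $\epsilon_d^{\rm init}>0$ for all $d$. $\ell_\tau$: sequences with $\|\lambda\|_{\ell_\tau}^\tau=\sum_m\lambda_m^\tau<\infty$. *)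

theory Defs
  imports "HOL-Analysis.Analysis" "HOL-Library.Landau_Symbols"
begin

text \<open>Eigenvalue sequence lam is indexed from 1 (lam 0 is irrelevant).
  Multi-indices k in N^d are functions on {1..d} with values >= 1,
  extensional (k l = undefined outside {1..d}).\<close>

definition nabla_S :: "nat set \<Rightarrow> nat \<Rightarrow> (nat \<Rightarrow> nat) set" where
  "nabla_S I d = {k \<in> {1..d} \<rightarrow>\<^sub>E {1..}. \<forall>i\<in>I. \<forall>j\<in>I. i < j \<longrightarrow> k i \<le> k j}"

definition lam_prod :: "(nat \<Rightarrow> real) \<Rightarrow> nat \<Rightarrow> (nat \<Rightarrow> nat) \<Rightarrow> real" where
  "lam_prod lam d k = (\<Prod>l\<in>{1..d}. lam (k l))"

text \<open>Information complexity n(eps,d), absolute error, worst case, I_d-symmetric case.\<close>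
definition info_compl_S :: "(nat \<Rightarrow> real) \<Rightarrow> (nat \<Rightarrow> nat set) \<Rightarrow> real \<Rightarrow> nat \<Rightarrow> nat" where
  "info_compl_S lam I eps d = card {k \<in> nabla_S (I d) d. lam_prod lam d k > eps\<^sup>2}"

definition poly_tractable_S :: "(nat \<Rightarrow> real) \<Rightarrow> (nat \<Rightarrow> nat set) \<Rightarrow> bool" where
  "poly_tractable_S lam I \<longleftrightarrow> (\<exists>C p q::real. C > 0 \<and> p > 0 \<and> q \<ge> 0 \<and>
     (\<forall>d\<ge>1. \<forall>eps. 0 < eps \<and> eps \<le> 1 \<longrightarrow>
        real (info_compl_S lam I eps d) \<le> C * eps powr (-p) * real d powr q))"

definition strongly_poly_tractable_S :: "(nat \<Rightarrow> real) \<Rightarrow> (nat \<Rightarrow> nat set) \<Rightarrow> bool" where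
  "strongly_poly_tractable_S lam I \<longleftrightarrow> (\<exists>C p::real. C > 0 \<and> p > 0 \<and>
     (\<forall>d\<ge>1. \<forall>eps. 0 < eps \<and> eps \<le> 1 \<longrightarrow>
        real (info_compl_S lam I eps d) \<le> C * eps powr (-p)))"

definition in_ell :: "real \<Rightarrow> (nat \<Rightarrow> real) \<Rightarrow> bool" where
  "in_ell tau lam \<longleftrightarrow> summable (\<lambda>m. lam (Suc m) powr tau)"

end

theory Submission
  imports Defs
begin

lemma cheb:
  fixes W :: "'a \<Rightarrow> real"
  assumes "finite Z" "\<forall>z\<in>Z. W z \<ge> 0" "t > 0"
  shows "real (card {z\<in>Z. W z > t}) \<le> (\<Sum>z\<in>Z. W z) / t"
proof -
  have "t * real (card {z\<in>Z. W z > t}) = (\<Sum>z\<in>{z\<in>Z. W z > t}. t)" by simp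
  also have "\<dots> \<le> (\<Sum>z\<in>{z\<in>Z. W z > t}. W z)" by (rule sum_mono) auto
  also have "\<dots> \<le> (\<Sum>z\<in>Z. W z)" by (rule sum_mono2) (use assms in auto)
  finally show ?thesis using assms by (simp add: field_simps mult.commute)
qed

lemma upclosed_mem:
  fixes I A :: "nat set"
  assumes fin: "finite I" and sub: "A \<subseteq> I" and up: "\<forall>a\<in>A. \<forall>j\<in>I. a < j \<longrightarrow> j \<in> A" and i: "i \<in> I"
  shows "i \<in> A \<longleftrightarrow> card {j\<in>I. i \<le> j} \<le> card A"
proof
  assume iA: "i \<in> A"
  have "{j\<in>I. i \<le> j} \<subseteq> A"
  proof
    fix j assume "j \<in> {j\<in>I. i \<le> j}"
    then have "j \<in> I" "i = j \<or> i < j" by auto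
    then show "j \<in> A" using up iA by blast
  qed
  then show "card {j\<in>I. i \<le> j} \<le> card A" using fin sub by (intro card_mono) (auto intro: finite_subset)
next
  assume c: "card {j\<in>I. i \<le> j} \<le> card A"
  show "i \<in> A"
  proof (rule ccontr)
    assume n: "i \<notin> A"
    have "A \<subseteq> {j\<in>I. i < j}"
    proof
      fix a assume a: "a \<in> A"
      have "\<not> a < i" using up a i n by blast
      moreover have "a \<noteq> i" using a n by blast
      ultimately show "a \<in> {j\<in>I. i < j}" using a sub by auto
    qed
    moreover have "{j\<in>I. i < j} \<subset> {j\<in>I. i \<le> j}" using i by auto
    ultimately have "A \<subset> {j\<in>I. i \<le> j}" by blast
    then have "card A < card {j\<in>I. i \<le> j}" using fin by (intro psubset_card_mono) auto
    with c show False by simp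
  qed
qed

lemma mono_det:
  fixes k k' :: "nat \<Rightarrow> nat"
  assumes fin: "finite I"
   and mk: "\<forall>i\<in>I. \<forall>j\<in>I. i<j \<longrightarrow> k i \<le> k j"
   and mk': "\<forall>i\<in>I. \<forall>j\<in>I. i<j \<longrightarrow> k' i \<le> k' j"
   and cnt: "\<And>m. m \<ge> 1 \<Longrightarrow> card {i\<in>I. m < k i} = card {i\<in>I. m < k' i}"
   and pos: "\<forall>i\<in>I. 1 \<le> k i" "\<forall>i\<in>I. 1 \<le> k' i"
  shows "\<forall>i\<in>I. k i = k' i"
proof
  fix i assume i: "i\<in>I"
  have key: "m < k i \<longleftrightarrow> m < k' i" if m: "m \<ge> 1" for m
  proof -
    have "m < k i \<longleftrightarrow> i \<in> {i\<in>I. m < k i}" using i by simp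
    also have "\<dots> \<longleftrightarrow> card {j\<in>I. i \<le> j} \<le> card {i\<in>I. m < k i}"
      by (rule upclosed_mem) (use fin mk i in \<open>auto intro: less_le_trans\<close>)
    also have "\<dots> \<longleftrightarrow> card {j\<in>I. i \<le> j} \<le> card {i\<in>I. m < k' i}" using cnt m by simp
    also have "\<dots> \<longleftrightarrow> i \<in> {i\<in>I. m < k' i}"
      by (rule upclosed_mem[symmetric]) (use fin mk' i in \<open>auto intro: less_le_trans\<close>)
    finally show ?thesis using i by simp
  qed
  show "k i = k' i" using key[of "k i"] key[of "k' i"] pos i by (meson linorder_neqE_nat less_irrefl)
qed

lemma card_gt_sum:
  fixes k :: "nat \<Rightarrow> nat"
  assumes fin: "finite I" and b: "\<forall>i\<in>I. k i \<le> M"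
  shows "card {i\<in>I. m < k i} = (\<Sum>m'\<in>{m+1..M}. card {i\<in>I. k i = m'})"
proof -
  have "(\<Sum>m'\<in>{m+1..M}. \<Sum>i\<in>{i\<in>{i\<in>I. m < k i}. k i = m'}. (1::nat)) = (\<Sum>i\<in>{i\<in>I. m < k i}. (1::nat))"
    by (rule sum.group) (use fin b in auto)
  moreover have "\<And>m'. m' \<in> {m+1..M} \<Longrightarrow> {i\<in>{i\<in>I. m < k i}. k i = m'} = {i\<in>I. k i = m'}" by auto
  ultimately show ?thesis by simp
qed


lemma prod_drop1:
  fixes f :: "nat \<Rightarrow> real"
  assumes "f 1 = 1"
  shows "(\<Prod>m\<in>{1..M}. f m) = (\<Prod>m\<in>{2..M}. f m)"
proof (rule prod.mono_neutral_right)
  show "\<forall>i\<in>{1..M} - {2..M}. f i = 1"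
  proof
    fix i assume "i \<in> {1..M} - {2..M}"
    then have "i = 1" by auto
    then show "f i = 1" using assms by simp
  qed
qed auto

lemma main_upper:
  fixes I :: "nat set" and S :: "(nat \<Rightarrow> nat) set" and d M :: nat and x :: "nat \<Rightarrow> real" and t :: real
  assumes Isub: "I \<subseteq> {1..d}"
   and x1: "x 1 = 1 \<or> I = {}" and xnn: "\<forall>m. x m \<ge> 0"
   and t: "t > 0"
   and S: "S \<subseteq> nabla_S I d"
   and P: "\<forall>k\<in>S. \<forall>l\<in>{1..d}. k l \<le> M"
   and W: "\<forall>k\<in>S. (\<Prod>l\<in>{1..d}. x (k l)) > t"
  shows "real (card S) \<le> (\<Prod>m\<in>{2..M}. \<Sum>n\<in>{0..card I}. x m ^ n) * (\<Sum>m\<in>{1..M}. x m) ^ (d - card I) / t"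
proof -
  define J where "J = {1..d} - I"
  define \<Phi> where "\<Phi> k = (restrict (\<lambda>m. card {i\<in>I. k i = m}) {2..M}, restrict k J)" for k :: "nat \<Rightarrow> nat"
  define Z where "Z = ({2..M} \<rightarrow>\<^sub>E {0..card I}) \<times> (J \<rightarrow>\<^sub>E {1..M})"
  define WZ where "WZ z = (\<Prod>m\<in>{2..M}. x m ^ fst z m) * (\<Prod>j\<in>J. x (snd z j))" for z :: "(nat \<Rightarrow> nat) \<times> (nat \<Rightarrow> nat)"
  have finI: "finite I" using Isub finite_subset by blast
  have finJ: "finite J" by (simp add: J_def)
  have IJ: "{1..d} = I \<union> J" "I \<inter> J = {}" using Isub by (auto simp: J_def)
  have cJ: "card J = d - card I" unfolding J_def using Isub by (simp add: card_Diff_subset finI)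
  have kS: "k \<in> {1..d} \<rightarrow>\<^sub>E {1..}" "\<forall>i\<in>I. \<forall>j\<in>I. i < j \<longrightarrow> k i \<le> k j" if "k \<in> S" for k
    using S that unfolding nabla_S_def by auto
  have weight: "(\<Prod>l\<in>{1..d}. x (k l)) = WZ (\<Phi> k)" if k: "k \<in> S" for k
  proof -
    have vals: "k ` I \<subseteq> {1..M}" using kS[OF k] P k Isub by (force simp: PiE_iff)
    have "(\<Prod>l\<in>{1..d}. x (k l)) = (\<Prod>i\<in>I. x (k i)) * (\<Prod>j\<in>J. x (k j))"
      using IJ finI finJ by (simp add: prod.union_disjoint)
    also have "(\<Prod>i\<in>I. x (k i)) = (\<Prod>m\<in>{1..M}. \<Prod>i\<in>{i\<in>I. k i = m}. x (k i))"
      by (rule prod.group[symmetric]) (use finI vals in auto)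
    also have "\<dots> = (\<Prod>m\<in>{1..M}. x m ^ card {i\<in>I. k i = m})"
      by (rule prod.cong) auto
    also have "\<dots> = (\<Prod>m\<in>{2..M}. x m ^ card {i\<in>I. k i = m})"
      by (rule prod_drop1) (use x1 in auto)
    also have "\<dots> = (\<Prod>m\<in>{2..M}. x m ^ fst (\<Phi> k) m)"
      by (rule prod.cong) (auto simp: \<Phi>_def)
    also have "(\<Prod>j\<in>J. x (k j)) = (\<Prod>j\<in>J. x (snd (\<Phi> k) j))"
      by (rule prod.cong) (auto simp: \<Phi>_def)
    finally show ?thesis by (simp add: WZ_def)
  qed
  have inj: "inj_on \<Phi> S"
  proof (rule inj_onI)
    fix k k' assume k: "k \<in> S" and k': "k' \<in> S" and eq: "\<Phi> k = \<Phi> k'"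
    have r1: "restrict (\<lambda>m. card {i\<in>I. k i = m}) {2..M} = restrict (\<lambda>m. card {i\<in>I. k' i = m}) {2..M}"
      using eq by (simp add: \<Phi>_def)
    have c: "card {i\<in>I. k i = m} = card {i\<in>I. k' i = m}" if m: "m \<in> {2..M}" for m
    proof -
      have "restrict (\<lambda>m. card {i\<in>I. k i = m}) {2..M} m = restrict (\<lambda>m. card {i\<in>I. k' i = m}) {2..M} m"
        using r1 by simp
      then show ?thesis using m by simp
    qed
    have bI: "\<forall>i\<in>I. k i \<le> M" "\<forall>i\<in>I. k' i \<le> M" using P k k' Isub by auto
    have pos: "\<forall>i\<in>I. 1 \<le> k i" "\<forall>i\<in>I. 1 \<le> k' i"
      using kS(1)[OF k] kS(1)[OF k'] Isub by (auto simp: PiE_iff)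
    have onI: "\<forall>i\<in>I. k i = k' i"
    proof (rule mono_det[OF finI kS(2)[OF k] kS(2)[OF k'] _ pos])
      fix m :: nat assume m: "m \<ge> 1"
      have "card {i\<in>I. m < k i} = (\<Sum>m'\<in>{m+1..M}. card {i\<in>I. k i = m'})"
        by (rule card_gt_sum[OF finI bI(1)])
      also have "\<dots> = (\<Sum>m'\<in>{m+1..M}. card {i\<in>I. k' i = m'})"
        by (rule sum.cong) (use m c in auto)
      also have "\<dots> = card {i\<in>I. m < k' i}"
        by (rule card_gt_sum[OF finI bI(2), symmetric])
      finally show "card {i\<in>I. m < k i} = card {i\<in>I. m < k' i}" .
    qed
    have r2: "restrict k J = restrict k' J" using eq by (simp add: \<Phi>_def)
    have onJ: "\<forall>j\<in>J. k j = k' j"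
    proof
      fix j assume j: "j \<in> J"
      have "restrict k J j = restrict k' J j" using r2 by simp
      then show "k j = k' j" using j by simp
    qed
    show "k = k'"
    proof
      fix l
      show "k l = k' l"
      proof (cases "l \<in> {1..d}")
        case True
        then have "l \<in> I \<or> l \<in> J" unfolding IJ(1) by simp
        then show ?thesis using onI onJ by blast
      next
        case False
        then show ?thesis using PiE_arb[OF kS(1)[OF k] False] PiE_arb[OF kS(1)[OF k'] False] by simp
      qed
    qed
  qed
  have img: "\<Phi> ` S \<subseteq> {z\<in>Z. WZ z > t}"
  proof
    fix z assume "z \<in> \<Phi> ` S"
    then obtain k where k: "k \<in> S" and z: "z = \<Phi> k" by blast
    have "card {i\<in>I. k i = m} \<le> card I" for m by (rule card_mono[OF finI]) auto
    moreover have "k j \<in> {1..M}" if "j \<in> J" for j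
      using kS(1)[OF k] P k that IJ by (auto simp: PiE_iff)
    ultimately have "z \<in> Z" unfolding z Z_def \<Phi>_def by auto
    moreover have "WZ z > t" using W k weight z by auto
    ultimately show "z \<in> {z\<in>Z. WZ z > t}" by blast
  qed
  have finZ: "finite Z" unfolding Z_def using finJ by (intro finite_cartesian_product finite_PiE) auto
  have "real (card S) = real (card (\<Phi> ` S))" using inj by (simp add: card_image)
  also have "\<dots> \<le> real (card {z\<in>Z. WZ z > t})"
    using img finZ by (intro of_nat_mono card_mono) auto
  also have "\<dots> \<le> (\<Sum>z\<in>Z. WZ z) / t"
    by (rule cheb[OF finZ _ t]) (use xnn in \<open>auto simp: WZ_def intro!: prod_nonneg mult_nonneg_nonneg\<close>)
  also have "(\<Sum>z\<in>Z. WZ z) = (\<Sum>c\<in>{2..M} \<rightarrow>\<^sub>E {0..card I}. \<Prod>m\<in>{2..M}. x m ^ c m) * (\<Sum>h\<in>J \<rightarrow>\<^sub>E {1..M}. \<Prod>j\<in>J. x (h j))"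
    unfolding Z_def WZ_def by (simp add: sum_product sum.cartesian_product case_prod_beta)
  also have "(\<Sum>c\<in>{2..M} \<rightarrow>\<^sub>E {0..card I}. \<Prod>m\<in>{2..M}. x m ^ c m) = (\<Prod>m\<in>{2..M}. \<Sum>n\<in>{0..card I}. x m ^ n)"
    by (rule prod_sum_PiE[symmetric]) auto
  also have "(\<Sum>h\<in>J \<rightarrow>\<^sub>E {1..M}. \<Prod>j\<in>J. x (h j)) = (\<Prod>j\<in>J. \<Sum>m\<in>{1..M}. x m)"
    by (rule prod_sum_PiE[symmetric]) (auto simp: finJ)
  also have "\<dots> = (\<Sum>m\<in>{1..M}. x m) ^ (d - card I)" by (simp add: cJ)
  finally show ?thesis .
qed


lemma lam_mono:
  fixes lam :: "nat \<Rightarrow> real"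
  assumes noninc: "\<forall>m\<ge>1. lam (Suc m) \<le> lam m" and "1 \<le> m" "m \<le> n"
  shows "lam n \<le> lam m"
  using assms(3) proof (induction n rule: dec_induct)
  case base then show ?case by simp
next
  case (step n) then show ?case using noninc assms(2) by (meson dual_order.trans le_trans)
qed

lemma lam_prod_le:
  fixes lam :: "nat \<Rightarrow> real"
  assumes nonneg: "\<forall>m\<ge>1. lam m \<ge> 0" and le1: "\<forall>m\<ge>1. lam m \<le> 1"
    and k: "\<forall>l\<in>{1..d}. k l \<ge> 1" and l: "l \<in> {1..d}"
  shows "lam_prod lam d k \<le> lam (k l)"
proof -
  have "lam_prod lam d k = lam (k l) * (\<Prod>i\<in>{1..d} - {l}. lam (k i))"
    unfolding lam_prod_def using l by (simp add: prod.remove)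
  also have "\<dots> \<le> lam (k l) * 1"
    using k l nonneg le1 by (intro mult_left_mono prod_le_1) auto
  finally show ?thesis by simp
qed

lemma nabla_sub_empty: "nabla_S I d \<subseteq> nabla_S {} d"
  unfolding nabla_S_def by auto

lemma info_bound:
  fixes lam :: "nat \<Rightarrow> real" and I :: "nat \<Rightarrow> nat set" and J :: "nat set"
  assumes nonneg: "\<forall>m\<ge>1. lam m \<ge> 0" and le1: "\<forall>m\<ge>1. lam m \<le> 1"
    and to_zero: "lam \<longlonglongrightarrow> 0" and tau: "tau > 0" and eps: "eps > 0"
    and Isub: "I d \<subseteq> {1..d}" and JI: "J = I d \<or> J = {}" and x1: "lam 1 = 1 \<or> J = {}"
  shows "\<exists>M. real (info_compl_S lam I eps d) \<le> (\<Prod>m\<in>{2..M}. \<Sum>n\<in>{0..card J}. (lam m powr tau) ^ n)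
           * (\<Sum>m\<in>{1..M}. lam m powr tau) ^ (d - card J) / (eps^2) powr tau"
proof -
  have e2: "eps^2 > 0" using eps by simp
  from to_zero have "eventually (\<lambda>m. dist (lam m) 0 < eps^2) sequentially"
    using e2 by (rule tendstoD)
  then obtain M where M: "\<And>m. m \<ge> M \<Longrightarrow> \<bar>lam m\<bar> < eps^2" by (auto simp: eventually_sequentially)
  define S where "S = {k \<in> nabla_S (I d) d. lam_prod lam d k > eps\<^sup>2}"
  have SJ: "S \<subseteq> nabla_S J d" using JI nabla_sub_empty unfolding S_def by auto
  have kge: "\<forall>l\<in>{1..d}. k l \<ge> 1" if "k \<in> S" for k using that unfolding S_def nabla_S_def by (auto simp: PiE_iff)
  have P: "\<forall>k\<in>S. \<forall>l\<in>{1..d}. k l \<le> M"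
  proof (intro ballI)
    fix k l assume k: "k \<in> S" and l: "l \<in> {1..d}"
    have "eps^2 < lam_prod lam d k" using k by (simp add: S_def)
    also have "\<dots> \<le> lam (k l)" by (rule lam_prod_le[OF nonneg le1 kge[OF k] l])
    finally have "eps^2 < lam (k l)" .
    then show "k l \<le> M" using M[of "k l"] by (metis abs_ge_self le_less_linear less_asym' order.strict_trans1 not_le)
  qed
  have W: "\<forall>k\<in>S. (\<Prod>l\<in>{1..d}. lam (k l) powr tau) > (eps^2) powr tau"
  proof
    fix k assume k: "k \<in> S"
    have "(eps^2) powr tau < (lam_prod lam d k) powr tau"
      using k tau e2 by (intro powr_less_mono2) (auto simp: S_def)
    also have "\<dots> = (\<Prod>l\<in>{1..d}. lam (k l) powr tau)" unfolding lam_prod_def by (rule prod_powr_distrib)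
    finally show "(\<Prod>l\<in>{1..d}. lam (k l) powr tau) > (eps^2) powr tau" .
  qed
  have JIsub: "J \<subseteq> {1..d}" using JI Isub by auto
  have "real (card S) \<le> (\<Prod>m\<in>{2..M}. \<Sum>n\<in>{0..card J}. (lam m powr tau) ^ n)
           * (\<Sum>m\<in>{1..M}. lam m powr tau) ^ (d - card J) / (eps^2) powr tau"
    by (rule main_upper[OF JIsub _ _ _ SJ P W]) (use x1 e2 in auto)
  then show ?thesis unfolding info_compl_S_def S_def by blast
qed


lemma choose_tau:
  fixes lam :: "nat \<Rightarrow> real"
  assumes nonneg: "\<forall>m\<ge>1. lam m \<ge> 0" and le1: "\<forall>m\<ge>1. lam m \<le> 1"
    and noninc: "\<forall>m\<ge>1. lam (Suc m) \<le> lam m"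
    and summ: "summable (\<lambda>m. lam (Suc m) powr tau0)" and tau0: "tau0 > 0" and L: "lam (Suc L) < 1"
  shows "\<exists>tau A. tau > 0 \<and> (\<forall>M. (\<Sum>m\<in>{1..M}. lam m powr tau) \<le> A) \<and> (\<forall>M. (\<Sum>m\<in>{Suc L..M}. lam m powr tau) \<le> 1/2)"
proof -
  define A0 where "A0 = suminf (\<lambda>m. lam (Suc m) powr tau0)"
  have hA0: "(\<Sum>m\<in>{1..M}. lam m powr tau0) \<le> A0" for M
  proof -
    have "(\<Sum>m\<in>{1..M}. lam m powr tau0) = (\<Sum>m<M. lam (Suc m) powr tau0)"
      using sum.atLeast1_atMost_eq[of "\<lambda>m. lam m powr tau0" M] by simp
    also have "\<dots> \<le> A0" unfolding A0_def by (rule sum_le_suminf[OF summ]) auto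
    finally show ?thesis .
  qed
  have A0nn: "A0 \<ge> 0" using hA0[of 0] by simp
  define \<theta> where "\<theta> = lam (Suc L)"
  have th: "0 \<le> \<theta>" "\<theta> < 1" using nonneg L by (auto simp: \<theta>_def)
  have key: "lam m powr (tau0 + real n) = lam m powr tau0 * lam m ^ n" if "m \<ge> 1" for m n
  proof (cases "lam m = 0")
    case True then show ?thesis by simp
  next
    case False then have "lam m > 0" using nonneg that by (simp add: order_less_le)
    then show ?thesis by (simp add: powr_add powr_realpow)
  qed
  have k1: "lam m powr (tau0 + real n) \<le> lam m powr tau0" if "m \<ge> 1" for m n
  proof -
    have "lam m ^ n \<le> 1" using nonneg le1 that by (simp add: power_le_one)
    then show ?thesis unfolding key[OF that] by (simp add: mult_left_le)
  qed
  have k2: "lam m powr (tau0 + real n) \<le> lam m powr tau0 * \<theta> ^ n" if "m \<ge> Suc L" for m n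
  proof -
    have "lam m \<le> \<theta>" unfolding \<theta>_def by (rule lam_mono[OF noninc _ that]) simp
    then have "lam m ^ n \<le> \<theta> ^ n" using nonneg that by (intro power_mono) auto
    moreover have m1: "m \<ge> 1" using that by simp
    ultimately show ?thesis unfolding key[OF m1] by (simp add: mult_left_mono)
  qed
  have "(\<lambda>n. \<theta> ^ n * A0) \<longlonglongrightarrow> 0"
    by (rule tendsto_mult_left_zero[OF LIMSEQ_realpow_zero[OF th]])
  then have "eventually (\<lambda>n. dist (\<theta> ^ n * A0) 0 < 1/2) sequentially" by (rule tendstoD) simp
  then obtain N where N: "\<forall>n\<ge>N. dist (\<theta> ^ n * A0) 0 < 1/2" by (auto simp: eventually_sequentially)
  define n where "n = N"
  have "dist (\<theta> ^ n * A0) 0 < 1/2" using N by (simp add: n_def)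
  then have n: "\<theta> ^ n * A0 < 1/2" by (simp add: dist_real_def abs_less_iff)
  define tau where "tau = tau0 + real n"
  have "tau > 0" using tau0 by (simp add: tau_def)
  moreover have "(\<Sum>m\<in>{1..M}. lam m powr tau) \<le> A0" for M
    using order.trans[OF sum_mono hA0] k1 unfolding tau_def by auto
  moreover have "(\<Sum>m\<in>{Suc L..M}. lam m powr tau) \<le> 1/2" for M
  proof -
    have "(\<Sum>m\<in>{Suc L..M}. lam m powr tau) \<le> (\<Sum>m\<in>{Suc L..M}. lam m powr tau0 * \<theta> ^ n)"
      using k2 unfolding tau_def by (intro sum_mono) auto
    also have "\<dots> = (\<Sum>m\<in>{Suc L..M}. lam m powr tau0) * \<theta> ^ n" by (simp add: sum_distrib_right)
    also have "\<dots> \<le> (\<Sum>m\<in>{1..M}. lam m powr tau0) * \<theta> ^ n"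
      using th by (intro mult_right_mono sum_mono2) auto
    also have "\<dots> \<le> A0 * \<theta> ^ n" using th hA0 by (intro mult_right_mono) auto
    finally show ?thesis using n by (simp add: mult.commute)
  qed
  ultimately show ?thesis by blast
qed

lemma geo_bound:
  fixes x :: real
  assumes "0 \<le> x" "x \<le> 1/2"
  shows "(\<Sum>n\<in>{0..a}. x ^ n) \<le> exp (2 * x)"
proof -
  have x1: "x \<noteq> 1" "1 - x > 0" using assms by auto
  have "(\<Sum>n\<in>{0..a}. x ^ n) = (\<Sum>n<Suc a. x ^ n)" by (simp add: atLeast0AtMost lessThan_Suc_atMost)
  also have "\<dots> = (1 - x ^ Suc a) / (1 - x)" by (subst sum_gp_strict) (simp add: x1(1))
  also have "\<dots> \<le> 1 / (1 - x)" using x1 assms by (intro divide_right_mono) auto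
  also have "\<dots> \<le> 1 + 2 * x"
  proof -
    have h: "(1 + 2*x)*(1-x) = 1 + x*(1-2*x)" by (simp add: algebra_simps)
    have "0 \<le> x * (1 - 2*x)" using assms by (intro mult_nonneg_nonneg) auto
    then have "1 \<le> (1 + 2 * x) * (1 - x)" unfolding h by linarith
    then show ?thesis using x1 by (simp add: divide_le_eq)
  qed
  also have "\<dots> \<le> exp (2 * x)" by (rule exp_ge_add_one_self)
  finally show ?thesis .
qed

lemma geo_bound1:
  fixes x :: real
  assumes "0 \<le> x" "x \<le> 1"
  shows "(\<Sum>n\<in>{0..a}. x ^ n) \<le> real a + 1"
proof -
  have "(\<Sum>n\<in>{0..a}. x ^ n) \<le> (\<Sum>n\<in>{0..a}. 1)" using assms by (intro sum_mono power_le_one) auto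
  then show ?thesis by simp
qed

lemma prod_bound:
  fixes x :: "nat \<Rightarrow> real"
  assumes L: "L \<ge> 1" and xnn: "\<forall>m. 0 \<le> x m" and x1: "\<forall>m\<ge>1. x m \<le> 1"
    and tail: "(\<Sum>m\<in>{Suc L..M}. x m) \<le> 1/2"
  shows "(\<Prod>m\<in>{2..M}. \<Sum>n\<in>{0..a}. x m ^ n) \<le> (real a + 1) ^ (L - 1) * exp 1"
proof -
  have xh: "x m \<le> 1/2" if "m \<in> {Suc L..M}" for m
  proof -
    have "x m \<le> (\<Sum>m\<in>{Suc L..M}. x m)" using that xnn by (intro member_le_sum) auto
    then show ?thesis using tail by simp
  qed
  have "(\<Prod>m\<in>{2..M}. \<Sum>n\<in>{0..a}. x m ^ n) \<le> (\<Prod>m\<in>{2..M}. if m \<le> L then real a + 1 else exp (2 * x m))"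
  proof (rule prod_mono)
    fix m assume m: "m \<in> {2..M}"
    show "0 \<le> (\<Sum>n\<in>{0..a}. x m ^ n) \<and> (\<Sum>n\<in>{0..a}. x m ^ n) \<le> (if m \<le> L then real a + 1 else exp (2 * x m))"
      using m xnn x1 geo_bound1[of "x m" a] geo_bound[of "x m" a] xh[of m] by (auto intro: sum_nonneg)
  qed
  also have "\<dots> = (\<Prod>m\<in>{2..M} \<inter> {m. m \<le> L}. real a + 1) * (\<Prod>m\<in>{2..M} \<inter> - {m. m \<le> L}. exp (2 * x m))"
    by (rule prod.If_cases) simp
  also have "\<dots> \<le> (real a + 1) ^ (L - 1) * exp 1"
  proof (rule mult_mono)
    have "card ({2..M} \<inter> {m. m \<le> L}) \<le> card {2..L}" by (intro card_mono) auto
    then show "(\<Prod>m\<in>{2..M} \<inter> {m. m \<le> L}. real a + 1) \<le> (real a + 1) ^ (L - 1)"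
      by (simp add: power_increasing)
    have eq: "{2..M} \<inter> - {m. m \<le> L} = {Suc L..M}" using L by auto
    have "(\<Prod>m\<in>{2..M} \<inter> - {m. m \<le> L}. exp (2 * x m)) = exp (2 * (\<Sum>m\<in>{Suc L..M}. x m))"
      unfolding eq by (simp add: exp_sum sum_distrib_left)
    also have "\<dots> \<le> exp 1" using tail by simp
    finally show "(\<Prod>m\<in>{2..M} \<inter> - {m. m \<le> L}. exp (2 * x m)) \<le> exp 1" .
  qed (auto intro: prod_nonneg)
  finally show ?thesis .
qed


lemma info_fin:
  fixes lam :: "nat \<Rightarrow> real"
  assumes nonneg: "\<forall>m\<ge>1. lam m \<ge> 0" and le1: "\<forall>m\<ge>1. lam m \<le> 1"
    and to_zero: "lam \<longlonglongrightarrow> 0" and eps: "eps > 0"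
  shows "finite {k \<in> nabla_S J d. lam_prod lam d k > eps^2}"
proof -
  have e2: "eps^2 > 0" using eps by simp
  from to_zero have "eventually (\<lambda>m. dist (lam m) 0 < eps^2) sequentially"
    using e2 by (rule tendstoD)
  then obtain M where M: "\<And>m. m \<ge> M \<Longrightarrow> \<bar>lam m\<bar> < eps^2" by (auto simp: eventually_sequentially)
  have "{k \<in> nabla_S J d. lam_prod lam d k > eps^2} \<subseteq> {1..d} \<rightarrow>\<^sub>E {1..M}"
  proof
    fix k assume k: "k \<in> {k \<in> nabla_S J d. lam_prod lam d k > eps^2}"
    have kP: "k \<in> {1..d} \<rightarrow>\<^sub>E {1..}" using k by (simp add: nabla_S_def)
    have kge: "\<forall>l\<in>{1..d}. k l \<ge> 1" using kP by (auto simp: PiE_iff)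
    have "k l \<le> M" if l: "l \<in> {1..d}" for l
    proof -
      have "eps^2 < lam_prod lam d k" using k by simp
      also have "\<dots> \<le> lam (k l)" by (rule lam_prod_le[OF nonneg le1 kge l])
      finally have "eps^2 < lam (k l)" .
      then show "k l \<le> M" using M[of "k l"] by (metis abs_ge_self le_less_linear less_asym' order.strict_trans1 not_le)
    qed
    then show "k \<in> {1..d} \<rightarrow>\<^sub>E {1..M}" using kP kge by (auto simp: PiE_iff)
  qed
  then show ?thesis by (rule finite_subset) (intro finite_PiE; auto)
qed

lemma sqrt_powr_neg:
  assumes "u > 0"
  shows "sqrt u powr (-p) = u powr (-p/2)"
proof -
  have "sqrt u = u powr (1/2)" using assms by (simp add: powr_half_sqrt)
  then show ?thesis by (simp add: powr_powr)
qed

lemma ell_nec: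
  fixes lam :: "nat \<Rightarrow> real" and I :: "nat \<Rightarrow> nat set"
  assumes nonneg: "\<forall>m\<ge>1. lam m \<ge> 0" and le1: "\<forall>m\<ge>1. lam m \<le> 1"
    and noninc: "\<forall>m\<ge>1. lam (Suc m) \<le> lam m" and I1: "I 1 = {1}"
    and to_zero: "lam \<longlonglongrightarrow> 0"
    and K: "\<forall>eps. 0 < eps \<and> eps \<le> 1 \<longrightarrow> real (info_compl_S lam I eps 1) \<le> K * eps powr (-p)"
    and p: "p > 0"
  shows "in_ell p lam"
proof -
  have bound: "lam m powr p \<le> 2 powr p * K^2 / (real m)^2" if m1: "m \<ge> 1" for m
  proof (cases "lam m = 0")
    case True then show ?thesis by simp
  next
    case False
    then have lp: "lam m > 0" using nonneg m1 by (simp add: order_less_le)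
    define u where "u = lam m / 2"
    have u: "u > 0" "u \<le> 1" using lp le1 m1 by (auto simp: u_def)
    define eps where "eps = sqrt u"
    have eps: "eps > 0" "eps \<le> 1" "eps^2 = u" using u by (auto simp: eps_def)
    define emb where "emb j = (restrict (\<lambda>_. j) {1..1} :: nat \<Rightarrow> nat)" for j :: nat
    have sub: "emb ` {1..m} \<subseteq> {k \<in> nabla_S (I 1) 1. lam_prod lam 1 k > eps^2}"
    proof
      fix k assume "k \<in> emb ` {1..m}"
      then obtain j where j: "j \<in> {1..m}" and k: "k = emb j" by blast
      have "k \<in> nabla_S (I 1) 1" using j unfolding k emb_def nabla_S_def I1 by auto
      moreover have "lam_prod lam 1 k = lam j" unfolding k emb_def lam_prod_def by simp
      moreover have "lam m \<le> lam j" using j by (intro lam_mono[OF noninc]) auto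
      ultimately show "k \<in> {k \<in> nabla_S (I 1) 1. lam_prod lam 1 k > eps^2}"
        using eps lp by (auto simp: u_def)
    qed
    have inj: "inj_on emb {1..m}"
    proof (rule inj_onI)
      fix i j assume "emb i = emb j" then have "emb i 1 = emb j 1" by simp
      then show "i = j" by (simp add: emb_def)
    qed
    have fin: "finite {k \<in> nabla_S (I 1) 1. lam_prod lam 1 k > eps^2}"
      by (rule info_fin[OF nonneg le1 to_zero eps(1)])
    have "real m = real (card (emb ` {1..m}))" using inj by (simp add: card_image)
    also have "\<dots> \<le> real (info_compl_S lam I eps 1)"
      unfolding info_compl_S_def using sub fin by (intro of_nat_mono card_mono) auto
    also have "\<dots> \<le> K * eps powr (-p)" using K eps by auto
    also have "\<dots> = K * u powr (-p/2)" unfolding eps_def using u by (simp add: sqrt_powr_neg)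
    finally have h1: "real m \<le> K * u powr (-p/2)" .
    have up: "u powr (p/2) > 0" using u by simp
    have "real m * u powr (p/2) \<le> K * u powr (-p/2) * u powr (p/2)"
      using h1 up by (intro mult_right_mono) auto
    also have "\<dots> = K" using u by (simp add: powr_add[symmetric])
    finally have h2: "real m * u powr (p/2) \<le> K" .
    have "(real m * u powr (p/2))^2 \<le> K^2"
      using h2 up m1 by (intro power_mono) auto
    also have "(real m * u powr (p/2))^2 = (real m)^2 * u powr p"
      using u by (simp add: power_mult_distrib powr_power)
    finally have h3: "(real m)^2 * u powr p \<le> K^2" .
    have "u powr p = lam m powr p / 2 powr p" unfolding u_def by (simp add: powr_divide)
    with h3 m1 show ?thesis by (simp add: field_simps)
  qed
  have "summable (\<lambda>n. inverse (real n ^ 2))" by (rule inverse_power_summable) simp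
  then have "summable (\<lambda>n. inverse (real (Suc n) ^ 2))" by (subst summable_Suc_iff)
  then have sg: "summable (\<lambda>n. 2 powr p * K^2 * inverse (real (Suc n) ^ 2))" by (rule summable_mult)
  have "summable (\<lambda>n. lam (Suc n) powr p)"
  proof (rule summable_comparison_test[OF _ sg], intro exI allI impI)
    fix n :: nat
    show "norm (lam (Suc n) powr p) \<le> 2 powr p * K^2 * inverse (real (Suc n) ^ 2)"
      using bound[of "Suc n"] by (simp add: divide_inverse)
  qed
  then show ?thesis by (simp add: in_ell_def)
qed


lemma subset_lb:
  fixes lam :: "nat \<Rightarrow> real" and I :: "nat \<Rightarrow> nat set"
  assumes nonneg: "\<forall>m\<ge>1. lam m \<ge> 0" and le1: "\<forall>m\<ge>1. lam m \<le> 1"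
    and to_zero: "lam \<longlonglongrightarrow> 0" and l1: "lam 1 = 1" and l2: "lam 2 > 0"
    and Isub: "I d \<subseteq> {1..d}"
  shows "real ((d - card (I d)) choose j) \<le> real (info_compl_S lam I (sqrt (lam 2 ^ j / 2)) d)"
proof -
  define J where "J = {1..d} - I d"
  have finJ: "finite J" by (simp add: J_def)
  have cJ: "card J = d - card (I d)" unfolding J_def using Isub
    by (simp add: card_Diff_subset finite_subset)
  define eps where "eps = sqrt (lam 2 ^ j / 2)"
  have eps: "eps > 0" "eps^2 = lam 2 ^ j / 2" using l2 by (auto simp: eps_def)
  define ind where "ind A = ((\<lambda>i. if i \<in> {1..d} then (if i \<in> A then 2 else 1) else undefined) :: nat \<Rightarrow> nat)" for A :: "nat set"
  define F where "F = {A. A \<subseteq> J \<and> card A = j}"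
  have cF: "card F = card J choose j" unfolding F_def by (rule n_subsets[OF finJ])
  have sub: "ind ` F \<subseteq> {k \<in> nabla_S (I d) d. lam_prod lam d k > eps^2}"
  proof
    fix k assume "k \<in> ind ` F"
    then obtain A where A: "A \<subseteq> J" "card A = j" and k: "k = ind A" by (auto simp: F_def)
    have AI: "i \<notin> A" if "i \<in> I d" for i using A that by (auto simp: J_def)
    have "k \<in> nabla_S (I d) d"
      unfolding nabla_S_def k using AI Isub by (auto simp: PiE_iff ind_def extensional_def)
    moreover have "lam_prod lam d k = lam 2 ^ j"
    proof -
      have "lam_prod lam d k = (\<Prod>l\<in>{1..d}. if l \<in> A then lam 2 else lam 1)"
        unfolding lam_prod_def k ind_def by (rule prod.cong) auto
      also have "\<dots> = (\<Prod>l\<in>{1..d} \<inter> {l. l \<in> A}. lam 2) * (\<Prod>l\<in>{1..d} \<inter> - {l. l \<in> A}. lam 1)"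
        by (rule prod.If_cases) simp
      also have "{1..d} \<inter> {l. l \<in> A} = A" using A by (auto simp: J_def)
      finally show ?thesis using l1 A by simp
    qed
    moreover have "eps^2 < lam 2 ^ j"
    proof -
      have "lam 2 ^ j > 0" using l2 by simp
      then show ?thesis unfolding eps(2) by linarith
    qed
    ultimately show "k \<in> {k \<in> nabla_S (I d) d. lam_prod lam d k > eps^2}" by simp
  qed
  have inj: "inj_on ind F"
  proof (rule inj_onI)
    fix A B assume A: "A \<in> F" and B: "B \<in> F" and eq: "ind A = ind B"
    have JJ: "J \<subseteq> {1..d}" by (simp add: J_def)
    have AB: "A \<subseteq> {1..d}" "B \<subseteq> {1..d}" using A B JJ unfolding F_def by blast+
    show "A = B"
    proof (rule set_eqI)
      fix l
      show "l \<in> A \<longleftrightarrow> l \<in> B"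
      proof (cases "l \<in> {1..d}")
        case True
        have "ind A l = ind B l" using eq by simp
        then have "(if l \<in> A then 2 else 1) = (if l \<in> B then (2::nat) else 1)" using True unfolding ind_def by simp
        then show ?thesis by (cases "l \<in> A"; cases "l \<in> B") simp_all
      next
        case False then show ?thesis using AB by auto
      qed
    qed
  qed
  have fin: "finite {k \<in> nabla_S (I d) d. lam_prod lam d k > eps^2}"
    by (rule info_fin[OF nonneg le1 to_zero eps(1)])
  have "real ((d - card (I d)) choose j) = real (card (ind ` F))" using inj cF cJ by (simp add: card_image)
  also have "\<dots> \<le> real (info_compl_S lam I eps d)"
    unfolding info_compl_S_def using sub fin by (intro of_nat_mono card_mono) auto
  finally show ?thesis by (simp add: eps_def)
qed

lemma thresh_lb:
  fixes lam :: "nat \<Rightarrow> real" and I :: "nat \<Rightarrow> nat set"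
  assumes nonneg: "\<forall>m\<ge>1. lam m \<ge> 0" and le1: "\<forall>m\<ge>1. lam m \<le> 1"
    and to_zero: "lam \<longlonglongrightarrow> 0" and l1: "lam 1 = 1" and l2: "lam 2 = 1"
    and Isub: "I d \<subseteq> {1..d}"
  shows "real (d + 1) \<le> real (info_compl_S lam I (1/2) d)"
proof -
  define th where "th t = ((\<lambda>i. if i \<in> {1..d} then (if t < i then 2 else 1) else undefined) :: nat \<Rightarrow> nat)" for t :: nat
  have sub: "th ` {0..d} \<subseteq> {k \<in> nabla_S (I d) d. lam_prod lam d k > (1/2)^2}"
  proof
    fix k assume "k \<in> th ` {0..d}"
    then obtain t where k: "k = th t" by auto
    have "k \<in> nabla_S (I d) d"
      unfolding nabla_S_def k
    proof (intro CollectI conjI ballI impI)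
      show "th t \<in> {1..d} \<rightarrow>\<^sub>E {1..}" by (auto simp: PiE_iff th_def extensional_def)
      fix i j assume ij: "i \<in> I d" "j \<in> I d" "i < j"
      then have "i \<in> {1..d}" "j \<in> {1..d}" using Isub by auto
      then show "th t i \<le> th t j" using ij(3) by (auto simp: th_def)
    qed
    moreover have "lam_prod lam d k = 1"
    proof -
      have "lam_prod lam d k = (\<Prod>l\<in>{1..d}. 1)"
        unfolding lam_prod_def k th_def using l1 l2 by (intro prod.cong) auto
      then show ?thesis by simp
    qed
    ultimately show "k \<in> {k \<in> nabla_S (I d) d. lam_prod lam d k > (1/2)^2}" by (simp add: power2_eq_square)
  qed
  have inj: "inj_on th {0..d}"
  proof (rule inj_onI)
    fix t t' assume t: "t \<in> {0..d}" and t': "t' \<in> {0..d}" and eq: "th t = th t'"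
    show "t = t'"
    proof (rule ccontr)
      assume ne: "t \<noteq> t'"
      show False
      proof (cases "t < t'")
        case True
        have "th t t' = th t' t'" using eq by simp
        then show False using True t' by (auto simp: th_def)
      next
        case False
        then have "t' < t" using ne by simp
        moreover have "th t t = th t' t" using eq by simp
        ultimately show False using t by (auto simp: th_def)
      qed
    qed
  qed
  have fin: "finite {k \<in> nabla_S (I d) d. lam_prod lam d k > (1/2)^2}"
    by (rule info_fin[OF nonneg le1 to_zero]) simp
  have "real (d + 1) = real (card (th ` {0..d}))" using inj by (simp add: card_image)
  also have "\<dots> \<le> real (info_compl_S lam I (1/2) d)"
    unfolding info_compl_S_def using sub fin by (intro of_nat_mono card_mono) auto
  finally show ?thesis .
qed


lemma pow_eps:
  fixes eps tau :: real
  assumes "eps > 0"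
  shows "1 / (eps^2) powr tau = eps powr (-(2*tau))"
proof -
  have "eps powr (2::real) = eps^2" using powr_realpow[OF assms, of 2] by simp
  then have "eps^2 = eps powr 2" by simp
  then have "(eps^2) powr tau = eps powr (2*tau)" by (simp add: powr_powr)
  then show ?thesis by (simp add: powr_minus_divide)
qed

lemma powr_pow_swap:
  fixes x r :: real
  assumes "x > 0"
  shows "(x ^ j) powr r = (x powr r) ^ j"
proof -
  have "x ^ j = x powr (real j)" using assms by (simp add: powr_realpow)
  then show ?thesis using assms by (simp add: powr_powr powr_power mult.commute)
qed

lemma log_arg:
  fixes b :: "nat \<Rightarrow> nat" and C1 \<beta> q :: real
  assumes C1: "C1 \<ge> 1" and \<beta>: "\<beta> \<ge> 1" and q: "q \<ge> 0"
    and H: "\<And>d j. d \<ge> 1 \<Longrightarrow> real (b d choose j) \<le> C1 * \<beta>^j * real d powr q"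
  shows "(\<lambda>d. real (b d)) \<in> O(\<lambda>d. ln (real d))"
proof -
  define E where "E = C1 * \<beta> * exp q"
  have E1: "E \<ge> 1"
  proof -
    have "1 \<le> C1 * \<beta>" using C1 \<beta> by (metis mult_mono' mult.right_neutral order.trans zero_le_one)
    moreover have "1 \<le> exp q" using q by simp
    ultimately show ?thesis unfolding E_def by (metis mult_mono' mult.right_neutral order.trans zero_le_one)
  qed
  define N where "N = nat \<lceil>exp (1::real)\<rceil> + 1"
  have ev: "eventually (\<lambda>d. norm (real (b d)) \<le> (2 * E) * norm (ln (real d))) sequentially"
    unfolding eventually_sequentially
  proof (intro exI allI impI)
    fix d assume dN: "d \<ge> N"
    have d1: "d \<ge> 1" using dN by (simp add: N_def)
    have "real d \<ge> exp 1" using dN unfolding N_def by linarith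
    then have ld: "ln (real d) \<ge> 1" using d1 by (subst ln_ge_iff) auto
    define j where "j = nat \<lceil>ln (real d)\<rceil>"
    have j1: "real j \<ge> ln (real d)" "real j \<le> ln (real d) + 1" using ld unfolding j_def by linarith+
    have jpos: "j \<ge> 1" using j1 ld by linarith
    have "real (b d) \<le> 2 * E * ln (real d)"
    proof (cases "b d < j")
      case True
      then have "real (b d) \<le> real j" by simp
      also have "\<dots> \<le> 2 * ln (real d)" using j1 ld by linarith
      also have "\<dots> \<le> 2 * E * ln (real d)" using E1 ld by (simp add: mult_right_mono)
      finally show ?thesis .
    next
      case False
      then have jb: "j \<le> b d" by simp
      have "(real (b d) / real j) ^ j \<le> real (b d choose j)" by (rule binomial_ge_n_over_k_pow_k[OF jb])
      also have "\<dots> \<le> C1 * \<beta>^j * real d powr q" by (rule H[OF d1])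
      also have "real d powr q \<le> exp q ^ j"
      proof -
        have "real d powr q = exp (q * ln (real d))" using d1 by (simp add: powr_def)
        also have "\<dots> \<le> exp (real j * q)" using q j1 by (simp add: mult_left_mono mult.commute)
        also have "\<dots> = exp q ^ j" by (rule exp_of_nat_mult)
        finally show ?thesis .
      qed
      then have "C1 * \<beta>^j * real d powr q \<le> C1 * \<beta>^j * exp q ^ j"
        using C1 \<beta> by (intro mult_left_mono) auto
      also have "C1 \<le> C1 ^ j" using C1 jpos by (metis power_increasing power_one_right)
      then have "C1 * \<beta>^j * exp q ^ j \<le> C1 ^ j * \<beta>^j * exp q ^ j"
        using \<beta> by (intro mult_right_mono mult_nonneg_nonneg zero_le_power) simp_all
      also have "\<dots> = E ^ j" by (simp only: E_def power_mult_distrib)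
      finally have hj: "(real (b d) / real j) ^ j \<le> E ^ j" .
      obtain j' where j': "j = Suc j'" using jpos by (cases j) auto
      have "real (b d) / real j \<le> E"
        by (rule power_le_imp_le_base[of _ j']) (use hj j' E1 in simp_all)
      then have "real (b d) \<le> E * real j" using jpos by (simp add: divide_le_eq)
      also have "\<dots> \<le> E * (2 * ln (real d))" using E1 j1 ld by (intro mult_left_mono) auto
      finally show ?thesis by simp
    qed
    then show "norm (real (b d)) \<le> (2 * E) * norm (ln (real d))" using ld by simp
  qed
  show ?thesis by (rule bigoI[OF ev])
qed


lemma upper_lt1:
  fixes lam :: "nat \<Rightarrow> real" and I :: "nat \<Rightarrow> nat set"
  assumes nonneg: "\<forall>m\<ge>1. lam m \<ge> 0" and le1: "\<forall>m\<ge>1. lam m \<le> 1"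
    and noninc: "\<forall>m\<ge>1. lam (Suc m) \<le> lam m" and to_zero: "lam \<longlonglongrightarrow> 0"
    and l1: "lam 1 < 1" and ell: "in_ell tau0 lam" and tau0: "tau0 > 0"
    and Isub: "\<forall>d\<ge>1. I d \<subseteq> {1..d}"
  shows "strongly_poly_tractable_S lam I"
proof -
  have summ: "summable (\<lambda>m. lam (Suc m) powr tau0)" using ell by (simp add: in_ell_def)
  obtain tau A where tau: "tau > 0" and sA: "\<forall>M. (\<Sum>m\<in>{Suc 0..M}. lam m powr tau) \<le> 1/2"
    using choose_tau[OF nonneg le1 noninc summ tau0, of 0] l1 by auto
  show ?thesis unfolding strongly_poly_tractable_S_def
  proof (intro exI conjI allI impI)
    show "(1::real) > 0" by simp
    show "2 * tau > 0" using tau by simp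
    fix d :: nat and eps :: real assume d: "d \<ge> 1" and e: "0 < eps \<and> eps \<le> 1"
    have Id: "I d \<subseteq> {1..d}" using Isub d by simp
    obtain M where M: "real (info_compl_S lam I eps d) \<le> (\<Prod>m\<in>{2..M}. \<Sum>n\<in>{0..card ({}::nat set)}. (lam m powr tau) ^ n)
           * (\<Sum>m\<in>{1..M}. lam m powr tau) ^ (d - card ({}::nat set)) / (eps^2) powr tau"
      using info_bound[where I=I and d=d and J="{}" and eps=eps, OF nonneg le1 to_zero tau _ Id] e by blast
    have s: "0 \<le> (\<Sum>m\<in>{1..M}. lam m powr tau)" "(\<Sum>m\<in>{1..M}. lam m powr tau) \<le> 1"
      using sA[rule_format, of M] by (auto intro: sum_nonneg)
    have p1: "(\<Sum>m\<in>{1..M}. lam m powr tau) ^ d \<le> 1" using s by (rule power_le_one)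
    have t: "(eps^2) powr tau > 0" using e by simp
    have "real (info_compl_S lam I eps d) \<le> (\<Sum>m\<in>{1..M}. lam m powr tau) ^ d / (eps^2) powr tau"
      using M by simp
    also have "\<dots> \<le> 1 / (eps^2) powr tau" using p1 t by (intro divide_right_mono) auto
    also have "\<dots> = 1 * eps powr (-(2*tau))" using pow_eps[of eps tau] e by simp
    finally show "real (info_compl_S lam I eps d) \<le> 1 * eps powr (-(2*tau))" .
  qed
qed

lemma upper_eq1:
  fixes lam :: "nat \<Rightarrow> real" and I :: "nat \<Rightarrow> nat set"
  assumes nonneg: "\<forall>m\<ge>1. lam m \<ge> 0" and le1: "\<forall>m\<ge>1. lam m \<le> 1"
    and noninc: "\<forall>m\<ge>1. lam (Suc m) \<le> lam m" and to_zero: "lam \<longlonglongrightarrow> 0"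
    and l1: "lam 1 = 1" and L1: "L \<ge> 1" and L: "lam (Suc L) < 1"
    and ell: "in_ell tau0 lam" and tau0: "tau0 > 0"
    and Isub: "\<forall>d\<ge>1. I d \<subseteq> {1..d}"
  shows "\<exists>tau A. tau > 0 \<and> A \<ge> 1 \<and> (\<forall>d\<ge>1. \<forall>eps>0. real (info_compl_S lam I eps d) \<le>
           (real (card (I d)) + 1)^(L-1) * exp 1 * A^(d - card (I d)) * eps powr (-(2*tau)))"
proof -
  have summ: "summable (\<lambda>m. lam (Suc m) powr tau0)" using ell by (simp add: in_ell_def)
  obtain tau A0 where tau: "tau > 0" and sA: "\<forall>M. (\<Sum>m\<in>{1..M}. lam m powr tau) \<le> A0"
     and tail: "\<forall>M. (\<Sum>m\<in>{Suc L..M}. lam m powr tau) \<le> 1/2"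
    using choose_tau[OF nonneg le1 noninc summ tau0 L] by auto
  define A where "A = max A0 1"
  have A1: "A \<ge> 1" by (simp add: A_def)
  have "\<forall>d\<ge>1. \<forall>eps>0. real (info_compl_S lam I eps d) \<le>
           (real (card (I d)) + 1)^(L-1) * exp 1 * A^(d - card (I d)) * eps powr (-(2*tau))"
  proof (intro allI impI)
    fix d :: nat and eps :: real assume d: "d \<ge> 1" and e: "eps > 0"
    have Id: "I d \<subseteq> {1..d}" using Isub d by simp
    define a where "a = card (I d)"
    define x where "x m = lam m powr tau" for m
    obtain M where M: "real (info_compl_S lam I eps d) \<le> (\<Prod>m\<in>{2..M}. \<Sum>n\<in>{0..a}. x m ^ n)
           * (\<Sum>m\<in>{1..M}. x m) ^ (d - a) / (eps^2) powr tau"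
      using info_bound[where I=I and d=d and J="I d" and eps=eps, OF nonneg le1 to_zero tau e Id] l1 unfolding a_def x_def by blast
    have xnn: "\<forall>m. 0 \<le> x m" by (simp add: x_def)
    have x1: "\<forall>m\<ge>1. x m \<le> 1" using nonneg le1 tau unfolding x_def by (auto intro: powr_le1)
    have G: "(\<Prod>m\<in>{2..M}. \<Sum>n\<in>{0..a}. x m ^ n) \<le> (real a + 1) ^ (L - 1) * exp 1"
      by (rule prod_bound[OF L1 xnn x1]) (use tail in \<open>simp add: x_def\<close>)
    have Gnn: "0 \<le> (\<Prod>m\<in>{2..M}. \<Sum>n\<in>{0..a}. x m ^ n)"
      using xnn by (intro prod_nonneg sum_nonneg zero_le_power) auto
    have S: "0 \<le> (\<Sum>m\<in>{1..M}. x m)" "(\<Sum>m\<in>{1..M}. x m) \<le> A"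
      using xnn sA A_def unfolding x_def by (auto intro: sum_nonneg order.trans[OF _ max.cobounded1])
    have SP: "(\<Sum>m\<in>{1..M}. x m) ^ (d - a) \<le> A ^ (d - a)" using S by (intro power_mono) auto
    have t: "(eps^2) powr tau > 0" using e by simp
    have "(\<Prod>m\<in>{2..M}. \<Sum>n\<in>{0..a}. x m ^ n) * (\<Sum>m\<in>{1..M}. x m) ^ (d - a)
          \<le> ((real a + 1) ^ (L - 1) * exp 1) * A ^ (d - a)"
      using G Gnn SP S by (intro mult_mono) auto
    then have "real (info_compl_S lam I eps d) \<le> ((real a + 1) ^ (L - 1) * exp 1) * A ^ (d - a) / (eps^2) powr tau"
      using M t by (meson divide_right_mono less_imp_le order.trans)
    also have "\<dots> = ((real a + 1) ^ (L - 1) * exp 1) * A ^ (d - a) * (1 / (eps^2) powr tau)" by simp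
    also have "\<dots> = (real a + 1) ^ (L - 1) * exp 1 * A ^ (d - a) * eps powr (-(2*tau))"
      using pow_eps[of eps tau] e by simp
    finally show "real (info_compl_S lam I eps d) \<le>
           (real (card (I d)) + 1)^(L-1) * exp 1 * A^(d - card (I d)) * eps powr (-(2*tau))"
      by (simp add: a_def)
  qed
  then show ?thesis using tau A1 by blast
qed


lemma U3_arith:
  fixes A c d0 e E :: real and a b d L N2 :: nat
  assumes A1: "A \<ge> 1" and c: "c > 0" and d: "d \<ge> 1" and ad: "a \<le> d"
    and b: "real b \<le> c * ln (real d) + real N2" and E: "E \<ge> 0"
  shows "(real a + 1)^(L-1) * exp 1 * A^b * E \<le>
         (2^(L-1) * exp 1 * A powr real N2) * E * real d powr (real (L-1) + c * ln A)"
proof -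
  have dpos: "real d > 0" using d by simp
  have P1: "(real a + 1)^(L-1) \<le> 2^(L-1) * real d powr real (L-1)"
  proof -
    have "(real a + 1)^(L-1) \<le> (2 * real d)^(L-1)" using ad d by (intro power_mono) auto
    also have "\<dots> = 2^(L-1) * real d powr real (L-1)" using dpos by (simp add: power_mult_distrib powr_realpow)
    finally show ?thesis .
  qed
  have P2: "A^b \<le> A powr real N2 * real d powr (c * ln A)"
  proof -
    have "A^b = A powr real b" using A1 by (simp add: powr_realpow)
    also have "\<dots> \<le> A powr (c * ln (real d) + real N2)" using A1 b by (intro powr_mono) auto
    also have "\<dots> = A powr real N2 * A powr (c * ln (real d))" by (simp add: powr_add mult.commute)
    also have "A powr (c * ln (real d)) = real d powr (c * ln A)"
      using A1 dpos by (simp add: powr_def mult.commute mult.left_commute)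
    finally show ?thesis .
  qed
  have "(real a + 1)^(L-1) * exp 1 * A^b * E \<le> (2^(L-1) * real d powr real (L-1)) * exp 1 * (A powr real N2 * real d powr (c * ln A)) * E"
    using P1 P2 E A1 by (intro mult_mono mult_nonneg_nonneg) auto
  also have "\<dots> = (2^(L-1) * exp 1 * A powr real N2) * E * (real d powr real (L-1) * real d powr (c * ln A))"
    by (simp add: algebra_simps)
  also have "real d powr real (L-1) * real d powr (c * ln A) = real d powr (real (L-1) + c * ln A)"
    by (simp add: powr_add)
  finally show ?thesis .
qed


lemma spt_rest:
  fixes lam :: "nat \<Rightarrow> real" and I :: "nat \<Rightarrow> nat set"
  assumes nonneg: "\<forall>m\<ge>1. lam m \<ge> 0" and le1: "\<forall>m\<ge>1. lam m \<le> 1"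
    and to_zero: "lam \<longlonglongrightarrow> 0" and l1: "lam 1 = 1" and l2p: "lam 2 > 0"
    and Isub: "\<forall>d\<ge>1. I d \<subseteq> {1..d}"
    and spt: "strongly_poly_tractable_S lam I"
  shows "lam 2 < 1 \<and> (\<lambda>d. real (d - card (I d))) \<in> O(\<lambda>_. 1)"
proof -
  obtain C p where C: "C > 0" and p: "p > 0" and H: "\<forall>d\<ge>1. \<forall>eps. 0 < eps \<and> eps \<le> 1 \<longrightarrow>
        real (info_compl_S lam I eps d) \<le> C * eps powr (-p)"
    using spt unfolding strongly_poly_tractable_S_def by blast
  have l2le: "lam 2 \<le> 1" using le1 by simp
  have "lam 2 < 1"
  proof (rule ccontr)
    assume "\<not> lam 2 < 1"
    then have l2: "lam 2 = 1" using l2le by simp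
    define D where "D = nat \<lceil>C * (1/2) powr (-p)\<rceil> + 1"
    have D1: "D \<ge> 1" by (simp add: D_def)
    have "real (D + 1) \<le> real (info_compl_S lam I (1/2) D)"
      by (rule thresh_lb[OF nonneg le1 to_zero l1 l2]) (use Isub D1 in simp)
    also have "\<dots> \<le> C * (1/2) powr (-p)" using H D1 by simp
    also have "\<dots> < real (D + 1)" unfolding D_def by linarith
    finally show False by simp
  qed
  moreover have "(\<lambda>d. real (d - card (I d))) \<in> O(\<lambda>_. 1)"
  proof -
    define eps where "eps = sqrt (lam 2 ^ 1 / 2)"
    have e: "0 < eps" "eps \<le> 1" using l2p l2le by (auto simp: eps_def)
    have "eventually (\<lambda>d. norm (real (d - card (I d))) \<le> (C * eps powr (-p)) * norm (1::real)) sequentially"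
      unfolding eventually_sequentially
    proof (intro exI allI impI)
      fix d :: nat assume d: "d \<ge> 1"
      have "real ((d - card (I d)) choose 1) \<le> real (info_compl_S lam I eps d)"
        unfolding eps_def by (rule subset_lb[OF nonneg le1 to_zero l1 l2p]) (use Isub d in simp)
      also have "\<dots> \<le> C * eps powr (-p)" using H d e by simp
      finally show "norm (real (d - card (I d))) \<le> (C * eps powr (-p)) * norm (1::real)" by simp
    qed
    then show ?thesis by (rule bigoI)
  qed
  ultimately show ?thesis by blast
qed

lemma pt_rest:
  fixes lam :: "nat \<Rightarrow> real" and I :: "nat \<Rightarrow> nat set"
  assumes nonneg: "\<forall>m\<ge>1. lam m \<ge> 0" and le1: "\<forall>m\<ge>1. lam m \<le> 1"
    and to_zero: "lam \<longlonglongrightarrow> 0" and l1: "lam 1 = 1" and l2p: "lam 2 > 0"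
    and Isub: "\<forall>d\<ge>1. I d \<subseteq> {1..d}"
    and pt: "poly_tractable_S lam I"
  shows "(\<lambda>d. real (d - card (I d))) \<in> O(\<lambda>d. ln (real d))"
proof -
  obtain C p q where C: "C > 0" and p: "p > 0" and q: "q \<ge> 0" and H: "\<forall>d\<ge>1. \<forall>eps. 0 < eps \<and> eps \<le> 1 \<longrightarrow>
        real (info_compl_S lam I eps d) \<le> C * eps powr (-p) * real d powr q"
    using pt unfolding poly_tractable_S_def by blast
  have l2le: "lam 2 \<le> 1" using le1 by simp
  define \<beta> where "\<beta> = lam 2 powr (-p/2)"
  define C1 where "C1 = max 1 (C * 2 powr (p/2))"
  have \<beta>1: "\<beta> \<ge> 1"
  proof -
    have "lam 2 powr (p/2) \<le> 1" using l2le l2p p by (intro powr_le1) auto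
    moreover have "lam 2 powr (p/2) > 0" using l2p by simp
    ultimately show ?thesis unfolding \<beta>_def by (simp add: powr_minus_divide)
  qed
  show ?thesis
  proof (rule log_arg[of C1 \<beta> q "\<lambda>d. d - card (I d)"])
    show "C1 \<ge> 1" by (simp add: C1_def)
    show "\<beta> \<ge> 1" by (rule \<beta>1)
    show "q \<ge> 0" by (rule q)
    fix d j :: nat assume d: "d \<ge> 1"
    define eps where "eps = sqrt (lam 2 ^ j / 2)"
    have lj: "lam 2 ^ j > 0" "lam 2 ^ j \<le> 1" using l2p l2le by (auto intro: power_le_one)
    have e: "0 < eps" "eps \<le> 1" using lj by (auto simp: eps_def)
    have ep: "eps powr (-p) = \<beta> ^ j * 2 powr (p/2)"
    proof -
      have "eps powr (-p) = (lam 2 ^ j / 2) powr (-p/2)" unfolding eps_def using lj by (intro sqrt_powr_neg) simp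
      also have "\<dots> = (lam 2 ^ j) powr (-p/2) / 2 powr (-p/2)" by (rule powr_divide)
      also have "(lam 2 ^ j) powr (-p/2) = \<beta> ^ j" unfolding \<beta>_def by (rule powr_pow_swap[OF l2p])
      also have "1 / 2 powr (-p/2) = 2 powr (p/2)" by (simp add: powr_minus_divide)
      then have "\<beta> ^ j / 2 powr (-p/2) = \<beta> ^ j * 2 powr (p/2)" by (metis times_divide_eq_right mult.right_neutral)
      finally show ?thesis .
    qed
    have "real ((d - card (I d)) choose j) \<le> real (info_compl_S lam I eps d)"
      unfolding eps_def by (rule subset_lb[OF nonneg le1 to_zero l1 l2p]) (use Isub d in simp)
    also have "\<dots> \<le> C * eps powr (-p) * real d powr q" using H d e by simp
    also have "\<dots> = (C * 2 powr (p/2)) * \<beta> ^ j * real d powr q" unfolding ep by (simp add: algebra_simps)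
    also have "\<dots> \<le> C1 * \<beta> ^ j * real d powr q"
      using \<beta>1 by (intro mult_right_mono) (auto simp: C1_def)
    finally show "real ((d - card (I d)) choose j) \<le> C1 * \<beta> ^ j * real d powr q" .
  qed
qed


theorem theorem2:
  fixes lam :: "nat \<Rightarrow> real" and I :: "nat \<Rightarrow> nat set"
  assumes nonneg: "\<forall>m\<ge>1. lam m \<ge> 0"
    and noninc: "\<forall>m\<ge>1. lam (Suc m) \<le> lam m"
    and to_zero: "lam \<longlonglongrightarrow> 0"
    and lam2_pos: "lam 2 > 0"
    and lam1_le: "lam 1 \<le> 1"
    and I_sub: "\<forall>d\<ge>1. I d \<noteq> {} \<and> I d \<subseteq> {1..d}"
    and I_1: "I 1 = {1}"
  shows "(strongly_poly_tractable_S lam I \<longleftrightarrow>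
            (\<exists>tau>0. in_ell tau lam) \<and>
            (lam 1 < 1 \<or> (lam 1 = 1 \<and> lam 2 < 1 \<and>
               (\<lambda>d. real (d - card (I d))) \<in> O(\<lambda>_. 1))))
       \<and> (poly_tractable_S lam I \<longleftrightarrow>
            (\<exists>tau>0. in_ell tau lam) \<and>
            (lam 1 < 1 \<or> (lam 1 = 1 \<and>
               (\<lambda>d. real (d - card (I d))) \<in> O(\<lambda>d. ln (real d)))))"
proof -
  have le1: "\<forall>m\<ge>1. lam m \<le> 1"
  proof (intro allI impI)
    fix m :: nat assume "m \<ge> 1"
    then have "lam m \<le> lam 1" by (intro lam_mono[OF noninc]) auto
    then show "lam m \<le> 1" using lam1_le by simp
  qed
  have Isub: "\<forall>d\<ge>1. I d \<subseteq> {1..d}" using I_sub by auto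
  have SPT_PT: "poly_tractable_S lam I" if spt: "strongly_poly_tractable_S lam I"
  proof -
    obtain C p where C: "C > 0" and p: "p > 0" and H: "\<forall>d\<ge>1. \<forall>eps. 0 < eps \<and> eps \<le> 1 \<longrightarrow>
        real (info_compl_S lam I eps d) \<le> C * eps powr (-p)"
      using spt unfolding strongly_poly_tractable_S_def by blast
    show ?thesis unfolding poly_tractable_S_def
      by (rule exI[of _ C], rule exI[of _ p], rule exI[of _ 0]) (use C p H in auto)
  qed
  have PT_ell: "\<exists>tau>0. in_ell tau lam" if pt: "poly_tractable_S lam I"
  proof -
    obtain C p q where C: "C > 0" and p: "p > 0" and H: "\<forall>d\<ge>1. \<forall>eps. 0 < eps \<and> eps \<le> 1 \<longrightarrow>
        real (info_compl_S lam I eps d) \<le> C * eps powr (-p) * real d powr q"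
      using pt unfolding poly_tractable_S_def by blast
    have K: "\<forall>eps. 0 < eps \<and> eps \<le> 1 \<longrightarrow> real (info_compl_S lam I eps 1) \<le> C * eps powr (-p)"
      using H by auto
    have "in_ell p lam" by (rule ell_nec[OF nonneg le1 noninc I_1 to_zero K p])
    then show ?thesis using p by blast
  qed
  have U2: "strongly_poly_tractable_S lam I"
    if ell: "in_ell tau0 lam" "tau0 > 0" and l1: "lam 1 = 1" and l2: "lam 2 < 1"
      and O1: "(\<lambda>d. real (d - card (I d))) \<in> O(\<lambda>_. 1)" for tau0
  proof -
    have l2': "lam (Suc 1) < 1" using l2 by (simp add: numeral_2_eq_2)
    obtain tau A where tau: "tau > 0" and A1: "A \<ge> 1" and H: "\<forall>d\<ge>1. \<forall>eps>0. real (info_compl_S lam I eps d) \<le>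
           (real (card (I d)) + 1)^(1-1) * exp 1 * A^(d - card (I d)) * eps powr (-(2*tau))"
      using upper_eq1[OF nonneg le1 noninc to_zero l1 _ l2' ell Isub] by auto
    obtain c where c: "c > 0" and ev: "eventually (\<lambda>d. norm (real (d - card (I d))) \<le> c * norm (1::real)) sequentially"
      using O1 by (elim landau_o.bigE)
    then obtain N where N: "\<forall>d\<ge>N. real (d - card (I d)) \<le> c" by (auto simp: eventually_sequentially)
    define B where "B = max (nat \<lceil>c\<rceil>) N"
    have bB: "d - card (I d) \<le> B" for d
    proof (cases "d \<ge> N")
      case True then have "real (d - card (I d)) \<le> c" using N by simp
      then have "d - card (I d) \<le> nat \<lceil>c\<rceil>" by linarith
      then show ?thesis by (simp add: B_def)
    next
      case False then show ?thesis by (simp add: B_def)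
    qed
    show ?thesis unfolding strongly_poly_tractable_S_def
    proof (intro exI conjI allI impI)
      show "exp 1 * A ^ B > 0" using A1 by simp
      show "2 * tau > 0" using tau by simp
      fix d :: nat and eps :: real assume d: "d \<ge> 1" and e: "0 < eps \<and> eps \<le> 1"
      have "real (info_compl_S lam I eps d) \<le> exp 1 * A^(d - card (I d)) * eps powr (-(2*tau))"
        using H d e by auto
      also have "\<dots> \<le> exp 1 * A ^ B * eps powr (-(2*tau))"
        using A1 bB[of d] by (intro mult_right_mono mult_left_mono power_increasing) auto
      finally show "real (info_compl_S lam I eps d) \<le> exp 1 * A ^ B * eps powr (-(2*tau))" .
    qed
  qed
  have U3: "poly_tractable_S lam I"
    if ell: "in_ell tau0 lam" "tau0 > 0" and l1: "lam 1 = 1"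
      and Oln: "(\<lambda>d. real (d - card (I d))) \<in> O(\<lambda>d. ln (real d))" for tau0
  proof -
    have "eventually (\<lambda>m. dist (lam m) 0 < 1) sequentially" using to_zero by (rule tendstoD) simp
    then obtain N where N: "\<forall>m\<ge>N. \<bar>lam m\<bar> < 1" by (auto simp: eventually_sequentially)
    define L where "L = N + 1"
    have L1: "L \<ge> 1" by (simp add: L_def)
    have "\<bar>lam (Suc L)\<bar> < 1" using N unfolding L_def by simp
    then have L: "lam (Suc L) < 1" by linarith
    obtain tau A where tau: "tau > 0" and A1: "A \<ge> 1" and H: "\<forall>d\<ge>1. \<forall>eps>0. real (info_compl_S lam I eps d) \<le>
           (real (card (I d)) + 1)^(L-1) * exp 1 * A^(d - card (I d)) * eps powr (-(2*tau))"
      using upper_eq1[OF nonneg le1 noninc to_zero l1 L1 L ell Isub] by auto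
    obtain c where c: "c > 0" and ev: "eventually (\<lambda>d. norm (real (d - card (I d))) \<le> c * norm (ln (real d))) sequentially"
      using Oln by (elim landau_o.bigE)
    then obtain N2 where N2: "\<forall>d\<ge>N2. real (d - card (I d)) \<le> c * \<bar>ln (real d)\<bar>" by (auto simp: eventually_sequentially)
    have bb: "real (d - card (I d)) \<le> c * ln (real d) + real N2" if d: "d \<ge> 1" for d
    proof (cases "d \<ge> N2")
      case True then show ?thesis using N2 d by auto
    next
      case False
      have "0 \<le> c * ln (real d)" using c d by simp
      then show ?thesis using False by linarith
    qed
    show ?thesis unfolding poly_tractable_S_def
    proof (intro exI conjI allI impI)
      show "2^(L-1) * exp 1 * A powr real N2 > 0" using A1 by simp
      show "2 * tau > 0" using tau by simp
      show "real (L-1) + c * ln A \<ge> 0" using A1 c by simp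
      fix d :: nat and eps :: real assume d: "d \<ge> 1" and e: "0 < eps \<and> eps \<le> 1"
      have ad: "card (I d) \<le> d"
      proof -
        have "card (I d) \<le> card {1..d}" using Isub d by (intro card_mono) auto
        then show ?thesis by simp
      qed
      have "real (info_compl_S lam I eps d) \<le> (real (card (I d)) + 1)^(L-1) * exp 1 * A^(d - card (I d)) * eps powr (-(2*tau))"
        using H d e by auto
      also have "\<dots> \<le> (2^(L-1) * exp 1 * A powr real N2) * eps powr (-(2*tau)) * real d powr (real (L-1) + c * ln A)"
        by (rule U3_arith[OF A1 c d ad bb[OF d]]) simp
      finally show "real (info_compl_S lam I eps d) \<le> (2^(L-1) * exp 1 * A powr real N2) * eps powr (-(2*tau)) * real d powr (real (L-1) + c * ln A)" .
    qed
  qed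
  have SPT_iff: "strongly_poly_tractable_S lam I \<longleftrightarrow>
            (\<exists>tau>0. in_ell tau lam) \<and>
            (lam 1 < 1 \<or> (lam 1 = 1 \<and> lam 2 < 1 \<and>
               (\<lambda>d. real (d - card (I d))) \<in> O(\<lambda>_. 1)))"
  proof
    assume spt: "strongly_poly_tractable_S lam I"
    have "\<exists>tau>0. in_ell tau lam" by (rule PT_ell[OF SPT_PT[OF spt]])
    moreover have "lam 1 < 1 \<or> (lam 1 = 1 \<and> lam 2 < 1 \<and> (\<lambda>d. real (d - card (I d))) \<in> O(\<lambda>_. 1))"
    proof (cases "lam 1 < 1")
      case False
      then have l1: "lam 1 = 1" using lam1_le by simp
      show ?thesis using spt_rest[OF nonneg le1 to_zero l1 lam2_pos Isub spt] l1 by simp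
    qed simp
    ultimately show "(\<exists>tau>0. in_ell tau lam) \<and> (lam 1 < 1 \<or> (lam 1 = 1 \<and> lam 2 < 1 \<and> (\<lambda>d. real (d - card (I d))) \<in> O(\<lambda>_. 1)))" by blast
  next
    assume R: "(\<exists>tau>0. in_ell tau lam) \<and> (lam 1 < 1 \<or> (lam 1 = 1 \<and> lam 2 < 1 \<and> (\<lambda>d. real (d - card (I d))) \<in> O(\<lambda>_. 1)))"
    then obtain tau0 where ell: "in_ell tau0 lam" "tau0 > 0" by blast
    show "strongly_poly_tractable_S lam I"
    proof (cases "lam 1 < 1")
      case True
      then show ?thesis by (rule upper_lt1[OF nonneg le1 noninc to_zero _ ell Isub])
    next
      case False
      then have "lam 1 = 1 \<and> lam 2 < 1 \<and> (\<lambda>d. real (d - card (I d))) \<in> O(\<lambda>_. 1)" using R by blast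
      then show ?thesis using U2[OF ell] by blast
    qed
  qed
  have PT_iff: "poly_tractable_S lam I \<longleftrightarrow>
            (\<exists>tau>0. in_ell tau lam) \<and>
            (lam 1 < 1 \<or> (lam 1 = 1 \<and>
               (\<lambda>d. real (d - card (I d))) \<in> O(\<lambda>d. ln (real d))))"
  proof
    assume pt: "poly_tractable_S lam I"
    have "\<exists>tau>0. in_ell tau lam" by (rule PT_ell[OF pt])
    moreover have "lam 1 < 1 \<or> (lam 1 = 1 \<and> (\<lambda>d. real (d - card (I d))) \<in> O(\<lambda>d. ln (real d)))"
    proof (cases "lam 1 < 1")
      case False
      then have l1: "lam 1 = 1" using lam1_le by simp
      show ?thesis using pt_rest[OF nonneg le1 to_zero l1 lam2_pos Isub pt] l1 by simp
    qed simp
    ultimately show "(\<exists>tau>0. in_ell tau lam) \<and> (lam 1 < 1 \<or> (lam 1 = 1 \<and> (\<lambda>d. real (d - card (I d))) \<in> O(\<lambda>d. ln (real d))))" by blast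
  next
    assume R: "(\<exists>tau>0. in_ell tau lam) \<and> (lam 1 < 1 \<or> (lam 1 = 1 \<and> (\<lambda>d. real (d - card (I d))) \<in> O(\<lambda>d. ln (real d))))"
    then obtain tau0 where ell: "in_ell tau0 lam" "tau0 > 0" by blast
    show "poly_tractable_S lam I"
    proof (cases "lam 1 < 1")
      case True
      then show ?thesis by (intro SPT_PT upper_lt1[OF nonneg le1 noninc to_zero _ ell Isub])
    next
      case False
      then have "lam 1 = 1 \<and> (\<lambda>d. real (d - card (I d))) \<in> O(\<lambda>d. ln (real d))" using R by blast
      then show ?thesis using U3[OF ell] by blast
    qed
  qed
  show ?thesis using SPT_iff PT_iff by blast
qed

end
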